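(* Let $Q$ be a groupoid quantale with base locale $A$ and let $X$ be a supported $Q$-module with support $\varsigma_X$. Then the following conditions are equivalent: (1) $\varsigma_X(q\cdot x)=\varsigma_Q(q\triangleleft\varsigma_X(x))$ for all $q\in Q$, $x\in X$; (2) $\varsigma_X(q\cdot x)\le\varsigma_Q(q)$ for all $q\in Q$, $x\in X$; (3) $\varsigma_X(q\cdot1_X)\le\varsigma_Q(q)$ for all $q\in Q$.
   Context: Let $A$ be a locale. An involutive $A$-$A$-quantale $Q$ is a sup-lattice with commuting unital left and right $A$-actions $a\triangleright q$, $q\triangleleft a$, an associative join-preserving multiplication with $(a\triangleright x)y=a\triangleright(xy)$, $(x\triangleleft a)y=x(a\triangleright y)$, $(xy)\triangleleft a=x(y\triangleleft a)$, and a join-preserving involution with $x^{**}=x$, $(xy)^*=y^*x^*$, $(a\triangleright x\triangleleft b)^*=b\triangleright x^*\triangleleft a$. A support is a sup-lattice homomorphism $\varsigma_Q:Q\to A$ with $\varsigma_Q(1_Q)=1_A$, $\varsigma_Q(x)\triangleright y\le xx^*y$, $\varsigma_Q(x)\triangleright x=x$; equivariant if $\varsigma_Q(a\triangleright x)=a\wedge\varsigma_Q(x)$. A groupoid quantale is such a $Q$ which is a frame with $(a\triangleright q)\wedge m=a\triangleright(q\wedge m)$, $m\wedge(q\triangleleft a)=(q\wedge m)\triangleleft a$, equipped with an equivariant support and a frame homomorphism $\upsilon:Q\to A$ with $\upsilon(a\triangleright1_Q)=a=\upsilon(1_Q\triangleleft a)$, such that the right adjoint of $Q\otimes_AQ\to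 Q$ preserves joins, $\bigvee_{xy\le a}\upsilon(x)\triangleright y=a$, and $\upsilon(a)\triangleright1_Q=\bigvee_{xx^*\le a}x$. A $Q$-module is a locale $X$ with a left $Q$-action $q\cdot x$ and unital left $A$-module structure $a\triangleright x$ satisfying $(a\triangleright q)\cdot x=a\triangleright(q\cdot x)$, $(q\triangleleft a)\cdot x=q\cdot(a\triangleright x)$, $a\triangleright(x\wedge y)=(a\triangleright x)\wedge y$. A pre-Hilbert $Q$-module has $\langle-,-\rangle:X\times X\to Q$ with $\langle q\cdot x,y\rangle=q\langle x,y\rangle$, $a\triangleright\langle x,1_X\rangle=\langle a\triangleright x,1_X\rangle$, $\langle\bigvee x_\alpha,y\rangle=\bigvee\langle x_\alpha,y\rangle$, $\langle x,y\rangle=\langle y,x\rangle^*$. A supported $Q$-module is a pre-Hilbert $Q$-module with a monotone $\varsigma_X:X\to A$ such that $\varsigma_X(1_X)=1_A$, $\varsigma_X(x)\triangleright1_X\le\langle x,x\rangle\cdot1_X$, and $\varsigma_X(x)\triangleright x=x$. *)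

theory Defs
  imports Main
begin

text \<open>The base locale A, the quantale Q and the module X are carried by
types of class complete_lattice (order = the sup-lattice / frame order, Sup = joins,
top = 1, inf = binary meet); the frame (locale) law is imposed explicitly.\<close>

definition frame_law :: "'a::complete_lattice itself \<Rightarrow> bool" where
  "frame_law _ \<longleftrightarrow> (\<forall>(a::'a) S. inf a (Sup S) = (SUP s\<in>S. inf a s))"

definition sup_hom :: "('a::complete_lattice \<Rightarrow> 'b::complete_lattice) \<Rightarrow> bool" where
  "sup_hom f \<longleftrightarrow> (\<forall>S. f (Sup S) = (SUP s\<in>S. f s))"

definition frame_hom :: "('a::complete_lattice \<Rightarrow> 'b::complete_lattice) \<Rightarrow> bool" where
  "frame_hom f \<longleftrightarrow> sup_hom f \<and> f top = top \<and> (\<forall>x y. f (inf x y) = inf (f x) (f y))"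

definition bi_sup_pres :: "('a::complete_lattice \<Rightarrow> 'b::complete_lattice \<Rightarrow> 'c::complete_lattice) \<Rightarrow> bool" where
  "bi_sup_pres m \<longleftrightarrow> (\<forall>S y. m (Sup S) y = (SUP s\<in>S. m s y)) \<and> (\<forall>x S. m x (Sup S) = (SUP s\<in>S. m x s))"

definition AA_quantale ::
  "('a::complete_lattice \<Rightarrow> 'q::complete_lattice \<Rightarrow> 'q) \<Rightarrow> ('q \<Rightarrow> 'a \<Rightarrow> 'q)
   \<Rightarrow> ('q \<Rightarrow> 'q \<Rightarrow> 'q) \<Rightarrow> ('q \<Rightarrow> 'q) \<Rightarrow> bool" where
  "AA_quantale lact ract mult invo \<longleftrightarrow>
     frame_law TYPE('a) \<and>
     \<comment> \<open>unital left A-module\<close>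
     bi_sup_pres lact \<and> (\<forall>a b q. lact (inf a b) q = lact a (lact b q)) \<and> (\<forall>q. lact top q = q) \<and>
     \<comment> \<open>unital right A-module\<close>
     bi_sup_pres ract \<and> (\<forall>a b q. ract q (inf a b) = ract (ract q a) b) \<and> (\<forall>q. ract q top = q) \<and>
     \<comment> \<open>the actions commute\<close>
     (\<forall>a b q. ract (lact a q) b = lact a (ract q b)) \<and>
     \<comment> \<open>associative join-preserving multiplication\<close>
     bi_sup_pres mult \<and> (\<forall>x y z. mult (mult x y) z = mult x (mult y z)) \<and>
     (\<forall>a x y. mult (lact a x) y = lact a (mult x y)) \<and>
     (\<forall>a x y. mult (ract x a) y = mult x (lact a y)) \<and>
     (\<forall>a x y. ract (mult x y) a = mult x (ract y a)) \<and>
     \<comment> \<open>involution\<close>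
     sup_hom invo \<and> (\<forall>x. invo (invo x) = x) \<and> (\<forall>x y. invo (mult x y) = mult (invo y) (invo x)) \<and>
     (\<forall>a b x. invo (ract (lact a x) b) = ract (lact b (invo x)) a)"

definition is_support ::
  "('a::complete_lattice \<Rightarrow> 'q::complete_lattice \<Rightarrow> 'q) \<Rightarrow> ('q \<Rightarrow> 'q \<Rightarrow> 'q) \<Rightarrow> ('q \<Rightarrow> 'q)
   \<Rightarrow> ('q \<Rightarrow> 'a) \<Rightarrow> bool" where
  "is_support lact mult invo s \<longleftrightarrow>
     sup_hom s \<and> s top = top \<and>
     (\<forall>x y. lact (s x) y \<le> mult (mult x (invo x)) y) \<and>
     (\<forall>x. lact (s x) x = x)"

definition equivariant_support ::
  "('a::complete_lattice \<Rightarrow> 'q::complete_lattice \<Rightarrow> 'q) \<Rightarrow> ('q \<Rightarrow> 'a) \<Rightarrow> bool" where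
  "equivariant_support lact s \<longleftrightarrow> (\<forall>a x. s (lact a x) = inf a (s x))"

text \<open>The tensor product Q \<otimes>_A Q, represented (as usual) by the subsets C of Q \<times> Q
that are down-closed, closed under joins in each coordinate separately (including
empty joins), and A-balanced: (x \<triangleleft> a, y) \<in> C iff (x, a \<triangleright> y) \<in> C.
The element x \<otimes> y corresponds to the least such set containing (x,y); the order
is inclusion.\<close>
definition tensor_closed ::
  "('a::complete_lattice \<Rightarrow> 'q::complete_lattice \<Rightarrow> 'q) \<Rightarrow> ('q \<Rightarrow> 'a \<Rightarrow> 'q) \<Rightarrow> ('q \<times> 'q) set \<Rightarrow> bool" where
  "tensor_closed lact ract C \<longleftrightarrow>
     (\<forall>x y x' y'. (x, y) \<in> C \<and> x' \<le> x \<and> y' \<le> y \<longrightarrow> (x', y') \<in> C) \<and>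
     (\<forall>S y. (\<forall>x\<in>S. (x, y) \<in> C) \<longrightarrow> (Sup S, y) \<in> C) \<and>
     (\<forall>x S. (\<forall>y\<in>S. (x, y) \<in> C) \<longrightarrow> (x, Sup S) \<in> C) \<and>
     (\<forall>x a y. (ract x a, y) \<in> C \<longleftrightarrow> (x, lact a y) \<in> C)"

definition tensor_join ::
  "('a::complete_lattice \<Rightarrow> 'q::complete_lattice \<Rightarrow> 'q) \<Rightarrow> ('q \<Rightarrow> 'a \<Rightarrow> 'q) \<Rightarrow> ('q \<times> 'q) set set \<Rightarrow> ('q \<times> 'q) set" where
  "tensor_join lact ract F = \<Inter> {C. tensor_closed lact ract C \<and> \<Union> F \<subseteq> C}"

text \<open>Right adjoint of the multiplication map Q \<otimes>_A Q \<rightarrow> Q, x \<otimes> y \<mapsto> xy.\<close>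
definition mult_radj :: "('q::complete_lattice \<Rightarrow> 'q \<Rightarrow> 'q) \<Rightarrow> 'q \<Rightarrow> ('q \<times> 'q) set" where
  "mult_radj mult q = {(x, y). mult x y \<le> q}"

definition groupoid_quantale ::
  "('a::complete_lattice \<Rightarrow> 'q::complete_lattice \<Rightarrow> 'q) \<Rightarrow> ('q \<Rightarrow> 'a \<Rightarrow> 'q)
   \<Rightarrow> ('q \<Rightarrow> 'q \<Rightarrow> 'q) \<Rightarrow> ('q \<Rightarrow> 'q) \<Rightarrow> ('q \<Rightarrow> 'a) \<Rightarrow> ('q \<Rightarrow> 'a) \<Rightarrow> bool" where
  "groupoid_quantale lact ract mult invo s ups \<longleftrightarrow>
     AA_quantale lact ract mult invo \<and>
     frame_law TYPE('q) \<and>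
     (\<forall>a q m. inf (lact a q) m = lact a (inf q m)) \<and>
     (\<forall>a q m. inf m (ract q a) = ract (inf q m) a) \<and>
     is_support lact mult invo s \<and> equivariant_support lact s \<and>
     frame_hom ups \<and> (\<forall>a. ups (lact a top) = a) \<and> (\<forall>a. ups (ract top a) = a) \<and>
     (\<forall>S. mult_radj mult (Sup S) = tensor_join lact ract (mult_radj mult ` S)) \<and>
     (\<forall>c. (SUP (x, y) \<in> {(x, y). mult x y \<le> c}. lact (ups x) y) = c) \<and>
     (\<forall>c. lact (ups c) top = Sup {x. mult x (invo x) \<le> c})"

definition Q_module ::
  "('a::complete_lattice \<Rightarrow> 'q::complete_lattice \<Rightarrow> 'q) \<Rightarrow> ('q \<Rightarrow> 'a \<Rightarrow> 'q) \<Rightarrow> ('q \<Rightarrow> 'q \<Rightarrow> 'q)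
   \<Rightarrow> ('q \<Rightarrow> 'x::complete_lattice \<Rightarrow> 'x) \<Rightarrow> ('a \<Rightarrow> 'x \<Rightarrow> 'x) \<Rightarrow> bool" where
  "Q_module lact ract mult qact xact \<longleftrightarrow>
     frame_law TYPE('x) \<and>
     bi_sup_pres qact \<and> (\<forall>p q x. qact (mult p q) x = qact p (qact q x)) \<and>
     bi_sup_pres xact \<and> (\<forall>a b x. xact (inf a b) x = xact a (xact b x)) \<and> (\<forall>x. xact top x = x) \<and>
     (\<forall>a q x. qact (lact a q) x = xact a (qact q x)) \<and>
     (\<forall>a q x. qact (ract q a) x = qact q (xact a x)) \<and>
     (\<forall>a x y. xact a (inf x y) = inf (xact a x) y)"

definition pre_Hilbert_module ::
  "('a::complete_lattice \<Rightarrow> 'q::complete_lattice \<Rightarrow> 'q) \<Rightarrow> ('q \<Rightarrow> 'a \<Rightarrow> 'q) \<Rightarrow> ('q \<Rightarrow> 'q \<Rightarrow> 'q)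
   \<Rightarrow> ('q \<Rightarrow> 'q) \<Rightarrow> ('q \<Rightarrow> 'x::complete_lattice \<Rightarrow> 'x) \<Rightarrow> ('a \<Rightarrow> 'x \<Rightarrow> 'x) \<Rightarrow> ('x \<Rightarrow> 'x \<Rightarrow> 'q) \<Rightarrow> bool" where
  "pre_Hilbert_module lact ract mult invo qact xact ip \<longleftrightarrow>
     Q_module lact ract mult qact xact \<and>
     (\<forall>q x y. ip (qact q x) y = mult q (ip x y)) \<and>
     (\<forall>a x. lact a (ip x top) = ip (xact a x) top) \<and>
     (\<forall>S y. ip (Sup S) y = (SUP x\<in>S. ip x y)) \<and>
     (\<forall>x y. ip x y = invo (ip y x))"

definition supported_module ::
  "('a::complete_lattice \<Rightarrow> 'q::complete_lattice \<Rightarrow> 'q) \<Rightarrow> ('q \<Rightarrow> 'a \<Rightarrow> 'q) \<Rightarrow> ('q \<Rightarrow> 'q \<Rightarrow> 'q)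
   \<Rightarrow> ('q \<Rightarrow> 'q) \<Rightarrow> ('q \<Rightarrow> 'x::complete_lattice \<Rightarrow> 'x) \<Rightarrow> ('a \<Rightarrow> 'x \<Rightarrow> 'x) \<Rightarrow> ('x \<Rightarrow> 'x \<Rightarrow> 'q)
   \<Rightarrow> ('x \<Rightarrow> 'a) \<Rightarrow> bool" where
  "supported_module lact ract mult invo qact xact ip sx \<longleftrightarrow>
     pre_Hilbert_module lact ract mult invo qact xact ip \<and>
     mono sx \<and> sx top = top \<and>
     (\<forall>x. xact (sx x) top \<le> qact (ip x x) top) \<and>
     (\<forall>x. xact (sx x) x = x)"

end

theory Submission
  imports Defs
begin

lemma sup_mono_gen:
  assumes "\<forall>S. f (Sup S) = (SUP s\<in>S. f s)" and "(x::'a::complete_lattice) \<le> y"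
  shows "(f x::'b::complete_lattice) \<le> f y"
proof -
  have "f y = f (Sup {x, y})" using assms(2) by (simp add: sup_absorb2)
  also have "\<dots> = sup (f x) (f y)" using assms(1)[rule_format, of "{x,y}"] by simp
  finally show ?thesis by (metis sup.cobounded1)
qed

lemma sup_hom_mono: "sup_hom f \<Longrightarrow> x \<le> y \<Longrightarrow> f x \<le> f y"
  unfolding sup_hom_def by (rule sup_mono_gen)

lemma bi_mono1: "bi_sup_pres m \<Longrightarrow> x \<le> x' \<Longrightarrow> m x y \<le> m x' y"
  unfolding bi_sup_pres_def
  by (rule sup_mono_gen[where f="\<lambda>x. m x y"]) auto

lemma bi_mono2: "bi_sup_pres m \<Longrightarrow> y \<le> y' \<Longrightarrow> m x y \<le> m x y'"
  unfolding bi_sup_pres_def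
  by (rule sup_mono_gen[where f="\<lambda>y. m x y"]) auto

theorem lemma4p5:
  fixes lact :: "'a::complete_lattice \<Rightarrow> 'q::complete_lattice \<Rightarrow> 'q"
    and ract :: "'q \<Rightarrow> 'a \<Rightarrow> 'q"
    and mult :: "'q \<Rightarrow> 'q \<Rightarrow> 'q"
    and invo :: "'q \<Rightarrow> 'q"
    and sQ :: "'q \<Rightarrow> 'a"
    and ups :: "'q \<Rightarrow> 'a"
    and qact :: "'q \<Rightarrow> 'x::complete_lattice \<Rightarrow> 'x"
    and xact :: "'a \<Rightarrow> 'x \<Rightarrow> 'x"
    and ip :: "'x \<Rightarrow> 'x \<Rightarrow> 'q"
    and sX :: "'x \<Rightarrow> 'a"
  assumes "groupoid_quantale lact ract mult invo sQ ups"
    and "supported_module lact ract mult invo qact xact ip sX"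
  shows "((\<forall>q x. sX (qact q x) = sQ (ract q (sX x))) \<longleftrightarrow> (\<forall>q x. sX (qact q x) \<le> sQ q))
       \<and> ((\<forall>q x. sX (qact q x) \<le> sQ q) \<longleftrightarrow> (\<forall>q. sX (qact q top) \<le> sQ q))"
proof -
  have AA: "AA_quantale lact ract mult invo" and sup: "is_support lact mult invo sQ"
    and eq: "equivariant_support lact sQ"
    using assms(1) unfolding groupoid_quantale_def by blast+
  have PH: "pre_Hilbert_module lact ract mult invo qact xact ip"
    and sXm: "mono sX" and sXt: "sX top = top"
    and sX1: "\<And>x. xact (sX x) top \<le> qact (ip x x) top"
    and sX2: "\<And>x. xact (sX x) x = x"
    using assms(2) unfolding supported_module_def by blast+
  have QM: "Q_module lact ract mult qact xact" using PH unfolding pre_Hilbert_module_def by blast+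
  have ipq: "\<And>q x y. ip (qact q x) y = mult q (ip x y)"
    and ipa: "\<And>a x. lact a (ip x top) = ip (xact a x) top"
    and ipS: "\<forall>S y. ip (Sup S) y = (SUP x\<in>S. ip x y)"
    and ipi: "\<And>x y. ip x y = invo (ip y x)"
    using PH unfolding pre_Hilbert_module_def by blast+
  have qbi: "bi_sup_pres qact" and qassoc: "\<And>p q x. qact (mult p q) x = qact p (qact q x)"
    and xbi: "bi_sup_pres xact"
    and ql: "\<And>a q x. qact (lact a q) x = xact a (qact q x)"
    and qr: "\<And>a q x. qact (ract q a) x = qact q (xact a x)"
    using QM unfolding Q_module_def by blast+
  have rbi: "bi_sup_pres ract" and rtop: "\<And>q. ract q top = q"
    and invh: "sup_hom invo"
    using AA unfolding AA_quantale_def by auto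
  have sQh: "sup_hom sQ" and sQs: "\<And>x y. lact (sQ x) y \<le> mult (mult x (invo x)) y"
    using sup unfolding is_support_def by auto
  have sQe: "\<And>a x. sQ (lact a x) = inf a (sQ x)" using eq unfolding equivariant_support_def by blast+
  have ipm: "\<And>x x' y. x \<le> x' \<Longrightarrow> ip x y \<le> ip x' y"
  proof -
    fix x x' y assume "(x::'x) \<le> x'"
    then show "ip x y \<le> ip x' y"
      using sup_mono_gen[where f="\<lambda>x. ip x y"] ipS by auto
  qed
  have ipm2: "\<And>x y y'. y \<le> y' \<Longrightarrow> ip x y \<le> ip x y'"
  proof -
    fix x y y' assume "(y::'x) \<le> y'"
    then have "ip y x \<le> ip y' x" by (rule ipm)
    then have "invo (ip y x) \<le> invo (ip y' x)" by (rule sup_hom_mono[OF invh])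
    then show "ip x y \<le> ip x y'" using ipi[of x y] ipi[of x y'] by simp
  qed
  have qtop: "qact top top = top"
  proof -
    have "(top::'x) = xact (sX top) top" using sX2 by simp
    also have "\<dots> \<le> qact (ip top top) top" by (rule sX1)
    also have "\<dots> \<le> qact top top" by (rule bi_mono1[OF qbi]) simp
    finally show ?thesis by (simp add: top_le)
  qed
  have ip11: "qact (ip top top) top = top"
    using sX1[of top] sX2[of top] sXt by (simp add: top_le)
  have d12: "(\<forall>q x. sX (qact q x) \<le> sQ q)" if h1: "\<forall>q x. sX (qact q x) = sQ (ract q (sX x))"
  proof (intro allI)
    fix q x
    have "ract q (sX x) \<le> ract q top" by (rule bi_mono2[OF rbi]) simp
    then have "sQ (ract q (sX x)) \<le> sQ q" using rtop[of q] sup_hom_mono[OF sQh] by simp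
    then show "sX (qact q x) \<le> sQ q" using h1 by simp
  qed
  have d23: "(\<forall>q. sX (qact q top) \<le> sQ q)" if h2: "\<forall>q x. sX (qact q x) \<le> sQ q"
    using h2 by blast
  have d32: "(\<forall>q x. sX (qact q x) \<le> sQ q)" if h3: "\<forall>q. sX (qact q top) \<le> sQ q"
  proof (intro allI)
    fix q x
    have "qact q x \<le> qact q top" by (rule bi_mono2[OF qbi]) simp
    then have "sX (qact q x) \<le> sX (qact q top)" using sXm by (simp add: monoD)
    then show "sX (qact q x) \<le> sQ q" using h3 order_trans by blast
  qed
  have d21: "(\<forall>q x. sX (qact q x) = sQ (ract q (sX x)))" if h2: "\<forall>q x. sX (qact q x) \<le> sQ q"
  proof (intro allI)
    fix q x
    define c where "c = sX x"
    define p where "p = ract q c"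
    define b where "b = sX (qact q x)"
    define a where "a = sQ p"
    have qx: "qact q x = qact p x" unfolding p_def using c_def qr[of q c x] sX2[of x] by simp
    have le1: "b \<le> a" unfolding b_def a_def using qx h2 by simp
    have "a \<le> b"
    proof -
      have s11: "sQ (ip top top) = top"
        using h2[rule_format, of "ip top top" top] ip11 sXt by (simp add: top_le)
      have "xact a top = qact (lact a top) top" using ql[of a top top] qtop by simp
      also have "\<dots> \<le> qact (mult (mult p (invo p)) top) top"
        by (rule bi_mono1[OF qbi]) (simp add: a_def sQs)
      also have "\<dots> = qact p (qact (invo p) top)" using qassoc[of p "invo p" top] qassoc[of "mult p (invo p)" top top] qtop by simp
      also have "\<dots> \<le> qact p top" by (rule bi_mono2[OF qbi]) simp
      also have "\<dots> = qact q (xact c top)" unfolding p_def by (rule qr)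
      also have "\<dots> \<le> qact q (qact (ip x x) top)" by (rule bi_mono2[OF qbi]) (simp add: c_def sX1)
      also have "\<dots> = qact (ip (qact q x) x) top" using qassoc[of q "ip x x" top] ipq[of q x x] by simp
      also have "\<dots> \<le> qact (ip (qact q x) top) top" by (rule bi_mono1[OF qbi]) (simp add: ipm2)
      also have "\<dots> \<le> qact (ip (xact b top) top) top"
      proof (rule bi_mono1[OF qbi], rule ipm)
        have "qact q x = xact b (qact q x)" unfolding b_def using sX2[of "qact q x"] by simp
        also have "\<dots> \<le> xact b top" by (rule bi_mono2[OF xbi]) simp
        finally show "qact q x \<le> xact b top" .
      qed
      also have "\<dots> = qact (lact b (ip top top)) top" using ipa[of b top] by simp
      also have "\<dots> = xact b (qact (ip top top) top)" by (rule ql)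
      also have "\<dots> = xact b top" using ip11 by simp
      finally have A: "xact a top \<le> xact b top" .
      have "ip (xact a top) top \<le> ip (xact b top) top" using A by (rule ipm)
      then have "lact a (ip top top) \<le> lact b (ip top top)" using ipa[of a top] ipa[of b top] by simp
      then have "sQ (lact a (ip top top)) \<le> sQ (lact b (ip top top))"
        by (rule sup_hom_mono[OF sQh])
      then show ?thesis using sQe s11 by simp
    qed
    then show "sX (qact q x) = sQ (ract q (sX x))"
      using le1 unfolding a_def b_def p_def c_def by simp
  qed
  show ?thesis using d12 d21 d23 d32 by blast
qed

end
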